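(* Let $b\ge 2$ be an integer. Every natural number that is antipalindromic in base $b$ and whose base-$b$ expansion has an even number of digits is divisible by $b-1$.
   Context: For an integer $b\ge 2$, every natural number $m$ has a unique base-$b$ expansion $m=a_nb^n+\dots+a_1b+a_0$ with $a_0,\dots,a_n\in\{0,1,\dots,b-1\}$ and $a_n\neq 0$ (it has $n+1$ digits). The number $m$ is antipalindromic in base $b$ if $a_j=b-1-a_{n-j}$ for all $j\in\{0,1,\dots,n\}$. *)

theory Defs
  imports Main
begin

definition digit :: "nat \<Rightarrow> nat \<Rightarrow> nat \<Rightarrow> nat" where
  "digit b m j = (m div b ^ j) mod b"

text \<open>Number of base-b digits of m > 0: the least k with m < b^k
  (so that b^(k-1) \<le> m < b^k and the leading digit a_(k-1) is nonzero).\<close>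
definition num_digits :: "nat \<Rightarrow> nat \<Rightarrow> nat" where
  "num_digits b m = (LEAST k. m < b ^ k)"

definition antipalindromic :: "nat \<Rightarrow> nat \<Rightarrow> bool" where
  "antipalindromic b m \<longleftrightarrow> 0 < m \<and>
     (let n = num_digits b m - 1 in
      \<forall>j\<le>n. digit b m j = b - 1 - digit b m (n - j))"

end

theory Submission
  imports Defs
begin

lemma expand: "m < b ^ K \<Longrightarrow> m = (\<Sum>j<K. digit b m j * b ^ j)"
proof (induction K arbitrary: m)
  case 0 then show ?case by simp
next
  case (Suc K)
  have "m < b ^ K * b" using Suc.prems by (simp only: power_Suc2)
  hence "m div b < b ^ K" by (rule less_mult_imp_div_less)
  hence IH: "m div b = (\<Sum>j<K. digit b (m div b) j * b ^ j)" using Suc.IH by blast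
  have "(\<Sum>j<Suc K. digit b m j * b ^ j) = digit b m 0 * b ^ 0 + (\<Sum>j<K. digit b m (Suc j) * b ^ Suc j)"
    by (rule sum.lessThan_Suc_shift)
  also have "(\<Sum>j<K. digit b m (Suc j) * b ^ Suc j) = b * (\<Sum>j<K. digit b (m div b) j * b ^ j)"
  proof -
    have "digit b m (Suc j) * b ^ Suc j = b * (digit b (m div b) j * b ^ j)" for j
    proof -
      have "digit b m (Suc j) = digit b (m div b) j"
        unfolding digit_def by (simp only: power_Suc div_mult2_eq)
      then show ?thesis by (simp only: power_Suc mult.left_commute)
    qed
    then show ?thesis by (simp only: sum_distrib_left)
  qed
  also have "digit b m 0 * b ^ 0 = m mod b" by (simp add: digit_def)
  finally show ?case using IH by simp
qed

lemma pow_mod1: assumes "b \<ge> 1" shows "(b::nat) ^ j mod (b - 1) = 1 mod (b - 1)"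
proof -
  have "b = 1 + (b - 1)" using assms by simp
  have "b mod (b - 1) = 1 mod (b - 1)" using mod_add_self2[of 1 "b - 1"] assms by simp
  have "b ^ j mod (b - 1) = (b mod (b - 1)) ^ j mod (b - 1)" by (rule power_mod[symmetric])
  also have "\<dots> = (1 mod (b - 1)) ^ j mod (b - 1)" by (simp only: \<open>b mod (b - 1) = 1 mod (b - 1)\<close>)
  also have "\<dots> = 1 ^ j mod (b - 1)" by (rule power_mod)
  also have "\<dots> = 1 mod (b - 1)" by simp
  finally show ?thesis .
qed

theorem mainTheorem3:
  fixes b m :: nat
  assumes "b \<ge> 2"
    and "antipalindromic b m"
    and "even (num_digits b m)"
  shows "(b - 1) dvd m"
proof -
  define K where "K = num_digits b m"
  define n where "n = K - 1"
  define d where "d = digit b m"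
  have ex: "m < b ^ m"
  proof -
    have "m < 2 ^ m" by (rule less_exp)
    also have "(2::nat) ^ m \<le> b ^ m" using assms(1) by (rule power_mono) simp
    finally show ?thesis .
  qed
  have mK: "m < b ^ K" unfolding K_def num_digits_def using LeastI[of "\<lambda>k. m < b ^ k" m, OF ex] by simp
  have m0: "0 < m" and anti: "\<forall>j\<le>n. d j = b - 1 - d (n - j)"
    using assms(2) unfolding antipalindromic_def n_def K_def d_def Let_def by blast+
  have "K \<noteq> 0" using mK m0 by (cases K) auto
  then have Kn: "K = Suc n" unfolding n_def by simp
  have dle: "d j \<le> b - 1" for j unfolding d_def digit_def
    using assms(1) by (simp add: less_Suc_eq_le[symmetric])
  have pair: "d j + d (n - j) = b - 1" if "j < K" for j
  proof -
    have "j \<le> n" using that Kn by simp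
    hence "d j = b - 1 - d (n - j)" using anti by blast
    thus ?thesis using dle[of "n - j"] by simp
  qed
  have refl: "(\<Sum>j<K. d (n - j)) = (\<Sum>j<K. d j)"
    unfolding Kn by (rule sum.reindex_bij_witness[where i="\<lambda>i. n - i" and j="\<lambda>i. n - i"]) auto
  have "(\<Sum>j<K. d j) + (\<Sum>j<K. d (n - j)) = (\<Sum>j<K. b - 1)"
    by (simp add: sum.distrib[symmetric] pair)
  hence S2: "2 * (\<Sum>j<K. d j) = K * (b - 1)" using refl by simp
  obtain k where k: "K = 2 * k" using assms(3) K_def by auto
  have S: "(\<Sum>j<K. d j) = k * (b - 1)" using S2 k by simp
  have "m mod (b - 1) = (\<Sum>j<K. d j * b ^ j) mod (b - 1)"
    using expand[OF mK] d_def by simp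
  also have "\<dots> = (\<Sum>j<K. d j * b ^ j mod (b - 1)) mod (b - 1)" by (rule mod_sum_eq[symmetric])
  also have "(\<Sum>j<K. d j * b ^ j mod (b - 1)) = (\<Sum>j<K. d j mod (b - 1))"
  proof (rule sum.cong)
    fix j
    have "d j * b ^ j mod (b - 1) = d j * (b ^ j mod (b - 1)) mod (b - 1)" by (rule mod_mult_right_eq[symmetric])
    also have "\<dots> = d j * (1 mod (b - 1)) mod (b - 1)" using pow_mod1[of b j] assms(1) by simp
    also have "\<dots> = d j * 1 mod (b - 1)" by (rule mod_mult_right_eq)
    finally show "d j * b ^ j mod (b - 1) = d j mod (b - 1)" by simp
  qed simp
  also have "(\<Sum>j<K. d j mod (b - 1)) mod (b - 1) = (\<Sum>j<K. d j) mod (b - 1)" by (rule mod_sum_eq)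
  also have "\<dots> = 0" using S by simp
  finally show ?thesis by (simp add: mod_eq_0_iff_dvd)
qed

end
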